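(* Let $L\subseteq\mathbb{T}^{\mathcal{J}}$ be a tropical linear space with associated tropical Plücker vector $p$, whose finite coordinates are indexed by $n$-element subsets of $\mathcal{J}$ (so $L=L_p$). Then the following are equivalent: (1) $L$ is an $n$-dimensional isotropical linear space; (2) $L^\top=L^r$; (3) $p_{\mathcal{J}\setminus T}=p_{T^*}$ for all $T\subseteq\mathcal{J}$ of size $n$.
   Context: $\mathbb{T}=\mathbb{R}\cup\{\infty\}$. Let $\mathcal{J}=\{1,\dots,n,1^*,\dots,n^*\}$ with involution $i\leftrightarrow i^*$, $i^{**}=i$, and $T^*=\{t^*:t\in T\}$. For a finite set $E$, a tropical Plücker vector of rank $r$ is $p\in\mathbb{T}^{\mathcal{P}(E)}$ with nonempty support $\{S:p_S\ne\infty\}$, all support sets of size $r$, such that for all $S,T\subseteq E$ with $|S|=r-1$, $|T|=r+1$, the minimum $\min_{i\in T\setminus S}(p_{S\cup\{i\}}+p_{T\setminus\{i\}})$ is attained at least twice or equals $\infty$. For $T\subseteq E$, $|T|=r+1$, let $(d_T)_i=p_{T\setminus\{i\}}$ if $i\in T$, $\infty$ otherwise; Plücker circuits are $d_T+\lambda\mathbf{1}$ ($\lambda\in\mathbb{R}$) with nonempty support. $x,y\in\mathbb{T}^E$ are tropically orthogonal if $\min_k(x_k+y_k)$ is attained at least twice or equals $\infty$; $X^\top$ is the set of vectors tropically orthogonal to all of $X$. The tropical linear space of $p$ is $L_p=\{$Plücker circuits of $p\}^\top$; a tropical linear space is a set of this form, $p$ is its associated tropical Plücker vector, and its dimension is $r$.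 The reflection of $v\in\mathbb{T}^{\mathcal{J}}$ is $v^r$ with $v^r_i=v_{i^*}$, and $L^r=\{x^r:x\in L\}$. An $n$-dimensional tropical linear space $L\subseteq\mathbb{T}^{\mathcal{J}}$ is isotropical if for all $x,y\in L$ the minimum $\min(x_1+y_{1^*},\dots,x_n+y_{n^*},x_{1^*}+y_1,\dots,x_{n^*}+y_n)$ is attained at least twice or equals $\infty$. *)

theory Defs
  imports Main "HOL-Library.Extended_Real"
begin

text \<open>Tropical semiring T = R \<union> {\<infinity>} is modelled inside ereal; vectors/Pluecker
  vectors are required to avoid -\<infinity> on the ground set and to be \<infinity> outside it.\<close>

datatype idx = Pl nat | St nat

fun star :: "idx \<Rightarrow> idx" where
  "star (Pl i) = St i"
| "star (St i) = Pl i"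

definition J :: "nat \<Rightarrow> idx set" where
  "J n = Pl ` {1..n} \<union> St ` {1..n}"

definition trop_vec :: "'a set \<Rightarrow> ('a \<Rightarrow> ereal) \<Rightarrow> bool" where
  "trop_vec E x \<longleftrightarrow> (\<forall>k\<in>E. x k \<noteq> -\<infinity>) \<and> (\<forall>k. k \<notin> E \<longrightarrow> x k = \<infinity>)"

definition trop_pvec :: "'a set \<Rightarrow> ('a set \<Rightarrow> ereal) \<Rightarrow> bool" where
  "trop_pvec E p \<longleftrightarrow> (\<forall>S. S \<subseteq> E \<longrightarrow> p S \<noteq> -\<infinity>) \<and> (\<forall>S. \<not> S \<subseteq> E \<longrightarrow> p S = \<infinity>)"

definition min_twice :: "'a set \<Rightarrow> ('a \<Rightarrow> ereal) \<Rightarrow> bool" where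
  "min_twice I f \<longleftrightarrow> (\<forall>k\<in>I. f k = \<infinity>) \<or>
     (\<exists>a\<in>I. \<exists>b\<in>I. a \<noteq> b \<and> f a = f b \<and> (\<forall>k\<in>I. f a \<le> f k))"

definition is_tpv :: "'a set \<Rightarrow> nat \<Rightarrow> ('a set \<Rightarrow> ereal) \<Rightarrow> bool" where
  "is_tpv E r p \<longleftrightarrow> finite E \<and> trop_pvec E p \<and> (\<exists>S. S \<subseteq> E \<and> p S \<noteq> \<infinity>) \<and>
     (\<forall>S. S \<subseteq> E \<and> p S \<noteq> \<infinity> \<longrightarrow> card S = r) \<and>
     (\<forall>S T. S \<subseteq> E \<and> T \<subseteq> E \<and> card S + 1 = r \<and> card T = r + 1 \<longrightarrow>
        min_twice (T - S) (\<lambda>i. p (insert i S) + p (T - {i})))"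

definition dvec :: "('a set \<Rightarrow> ereal) \<Rightarrow> 'a set \<Rightarrow> 'a \<Rightarrow> ereal" where
  "dvec p T i = (if i \<in> T then p (T - {i}) else \<infinity>)"

definition pl_circuits :: "'a set \<Rightarrow> nat \<Rightarrow> ('a set \<Rightarrow> ereal) \<Rightarrow> ('a \<Rightarrow> ereal) set" where
  "pl_circuits E r p = {x. \<exists>T. T \<subseteq> E \<and> card T = r + 1 \<and>
      (\<exists>c::real. x = (\<lambda>i. dvec p T i + ereal c)) \<and> (\<exists>i. x i \<noteq> \<infinity>)}"

definition torth :: "'a set \<Rightarrow> ('a \<Rightarrow> ereal) \<Rightarrow> ('a \<Rightarrow> ereal) \<Rightarrow> bool" where
  "torth E x y \<longleftrightarrow> min_twice E (\<lambda>k. x k + y k)"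

definition tperp :: "'a set \<Rightarrow> ('a \<Rightarrow> ereal) set \<Rightarrow> ('a \<Rightarrow> ereal) set" where
  "tperp E X = {y. trop_vec E y \<and> (\<forall>x\<in>X. torth E x y)}"

definition tls :: "'a set \<Rightarrow> nat \<Rightarrow> ('a set \<Rightarrow> ereal) \<Rightarrow> ('a \<Rightarrow> ereal) set" where
  "tls E r p = tperp E (pl_circuits E r p)"

definition is_tls_dim :: "'a set \<Rightarrow> nat \<Rightarrow> ('a \<Rightarrow> ereal) set \<Rightarrow> bool" where
  "is_tls_dim E r L \<longleftrightarrow> (\<exists>p. is_tpv E r p \<and> L = tls E r p)"

definition reflect :: "(idx \<Rightarrow> ereal) \<Rightarrow> idx \<Rightarrow> ereal" where
  "reflect x = (\<lambda>i. x (star i))"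

definition isotropical :: "nat \<Rightarrow> (idx \<Rightarrow> ereal) set \<Rightarrow> bool" where
  "isotropical n L \<longleftrightarrow> is_tls_dim (J n) n L \<and>
     (\<forall>x\<in>L. \<forall>y\<in>L. min_twice (J n) (\<lambda>k. x k + y (star k)))"

end

theory Submission
  imports Defs
begin


lemma mt_two:
  assumes "a \<noteq> b"
  shows "min_twice {a,b} f \<longleftrightarrow> f a = f b"
proof
  assume h: "min_twice {a,b} f"
  show "f a = f b"
  proof (cases "f a = \<infinity> \<and> f b = \<infinity>")
    case True thus ?thesis by simp
  next
    case False
    with h obtain x y where "x \<in> {a,b}" "y \<in> {a,b}" "x \<noteq> y" "f x = f y"
      unfolding min_twice_def by blast
    thus ?thesis by auto
  qed
next
  assume "f a = f b"
  show "min_twice {a,b} f"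
  proof -
    have "a \<in> {a,b}" "b \<in> {a,b}" by auto
    moreover have "\<forall>k\<in>{a,b}. f a \<le> f k" using \<open>f a = f b\<close> by auto
    ultimately show ?thesis using assms \<open>f a = f b\<close> unfolding min_twice_def by blast
  qed
qed

lemma mt_other:
  assumes "min_twice I f" "a \<in> I" "f a \<noteq> \<infinity>"
  shows "\<exists>i\<in>I. i \<noteq> a \<and> (\<forall>k\<in>I. f i \<le> f k)"
  using assms unfolding min_twice_def by metis

lemma mt_restrict:
  assumes "A \<subseteq> I" "\<And>k. k \<in> I \<Longrightarrow> k \<notin> A \<Longrightarrow> f k = \<infinity>"
  shows "min_twice I f \<longleftrightarrow> min_twice A f"
proof
  assume h: "min_twice I f"
  show "min_twice A f"
  proof (cases "\<forall>k\<in>A. f k = \<infinity>")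
    case True thus ?thesis by (simp add: min_twice_def)
  next
    case False
    then obtain k where k: "k \<in> A" "f k \<noteq> \<infinity>" by auto
    from h have "\<not> (\<forall>k\<in>I. f k = \<infinity>)" using k assms(1) by auto
    with h obtain a b where ab: "a\<in>I" "b\<in>I" "a \<noteq> b" "f a = f b" "\<forall>k\<in>I. f a \<le> f k"
      unfolding min_twice_def by blast
    have "f a \<le> f k" using ab(5) k assms(1) by auto
    hence "f a \<noteq> \<infinity>" using k(2) by auto
    hence "a \<in> A" "b \<in> A" using assms(2) ab(1,2,4) by metis+
    thus ?thesis using ab assms(1) unfolding min_twice_def by blast
  qed
next
  assume h: "min_twice A f"
  show "min_twice I f"
  proof (cases "\<forall>k\<in>A. f k = \<infinity>")
    case True thus ?thesis using assms(2) by (auto simp: min_twice_def)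
  next
    case False
    with h obtain a b where ab: "a\<in>A" "b\<in>A" "a \<noteq> b" "f a = f b" "\<forall>k\<in>A. f a \<le> f k"
      unfolding min_twice_def by blast
    have "\<forall>k\<in>I. f a \<le> f k"
    proof
      fix k assume "k \<in> I"
      show "f a \<le> f k" proof (cases "k \<in> A")
        case True thus ?thesis using ab(5) by auto
      next
        case False thus ?thesis using assms(2) \<open>k \<in> I\<close> by auto
      qed
    qed
    thus ?thesis using ab assms(1) unfolding min_twice_def by blast
  qed
qed

lemma mt_shift:
  "min_twice I (\<lambda>k. f k + ereal c) \<longleftrightarrow> min_twice I f"
proof -
  have le: "\<And>x y. x + ereal c \<le> y + ereal c \<longleftrightarrow> x \<le> y"
    by (simp add: ereal_add_le_add_iff2)
  have eq: "\<And>x y. x + ereal c = y + ereal c \<longleftrightarrow> x = y"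
    by (metis le order.antisym order_refl)
  have inf: "\<And>x. x + ereal c = \<infinity> \<longleftrightarrow> x = \<infinity>" by (cases rule: ereal_cases) auto
  show ?thesis unfolding min_twice_def eq le inf ..
qed

lemma mt_reindex:
  assumes "bij_betw g A I"
  shows "min_twice I f \<longleftrightarrow> min_twice A (\<lambda>k. f (g k))"
proof -
  have im: "g ` A = I" and inj: "inj_on g A" using assms by (auto simp: bij_betw_def)
  have A1: "(\<forall>k\<in>I. f k = \<infinity>) \<longleftrightarrow> (\<forall>k\<in>A. f (g k) = \<infinity>)" using im by auto
  have A2: "(\<exists>a\<in>I. \<exists>b\<in>I. a \<noteq> b \<and> f a = f b \<and> (\<forall>k\<in>I. f a \<le> f k)) \<longleftrightarrow>
     (\<exists>a\<in>A. \<exists>b\<in>A. a \<noteq> b \<and> f (g a) = f (g b) \<and> (\<forall>k\<in>A. f (g a) \<le> f (g k)))"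
  proof
    assume "\<exists>a\<in>I. \<exists>b\<in>I. a \<noteq> b \<and> f a = f b \<and> (\<forall>k\<in>I. f a \<le> f k)"
    then obtain a b where ab: "a\<in>I" "b\<in>I" "a \<noteq> b" "f a = f b" "\<forall>k\<in>I. f a \<le> f k" by blast
    obtain a' b' where ab': "a' \<in> A" "b' \<in> A" "a = g a'" "b = g b'" using ab im by blast
    have "a' \<noteq> b'" using ab(3) ab' by auto
    moreover have "\<forall>k\<in>A. f (g a') \<le> f (g k)" using ab(5) ab' im by auto
    ultimately show "\<exists>a\<in>A. \<exists>b\<in>A. a \<noteq> b \<and> f (g a) = f (g b) \<and> (\<forall>k\<in>A. f (g a) \<le> f (g k))"
      using ab(4) ab' by blast
  next
    assume "\<exists>a\<in>A. \<exists>b\<in>A. a \<noteq> b \<and> f (g a) = f (g b) \<and> (\<forall>k\<in>A. f (g a) \<le> f (g k))"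
    then obtain a b where ab: "a\<in>A" "b\<in>A" "a \<noteq> b" "f (g a) = f (g b)" "\<forall>k\<in>A. f (g a) \<le> f (g k)" by blast
    have "g a \<noteq> g b" using ab inj by (meson inj_on_def)
    moreover have "\<forall>k\<in>I. f (g a) \<le> f k" using ab(5) im by auto
    ultimately show "\<exists>a\<in>I. \<exists>b\<in>I. a \<noteq> b \<and> f a = f b \<and> (\<forall>k\<in>I. f a \<le> f k)"
      using ab im by blast
  qed
  show ?thesis unfolding min_twice_def using A1 A2 by simp
qed

lemma mt_unique:
  assumes "finite I" "\<not> min_twice I f"
  shows "\<exists>k0\<in>I. f k0 \<noteq> \<infinity> \<and> (\<forall>k\<in>I. k \<noteq> k0 \<longrightarrow> f k0 < f k)"
proof -
  have ne: "I \<noteq> {}" using assms(2) by (auto simp: min_twice_def)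
  have "Min (f ` I) \<in> f ` I" using Min_in assms(1) ne by blast
  then obtain k0 where k0I: "k0 \<in> I" and k0m: "f k0 = Min (f ` I)" by force
  have k0: "\<forall>k\<in>I. f k0 \<le> f k" using k0m assms(1) by simp
  have fin: "f k0 \<noteq> \<infinity>"
  proof
    assume "f k0 = \<infinity>"
    hence "\<forall>k\<in>I. f k = \<infinity>" using k0 by (metis ereal_infty_less_eq(1))
    thus False using assms(2) by (simp add: min_twice_def)
  qed
  have "\<forall>k\<in>I. k \<noteq> k0 \<longrightarrow> f k0 < f k"
  proof (intro ballI impI)
    fix k assume k: "k \<in> I" "k \<noteq> k0"
    show "f k0 < f k"
    proof (rule ccontr)
      assume "\<not> f k0 < f k"
      hence "f k0 = f k" using k0 k by (meson order_le_less)
      moreover have "k0 \<noteq> k" using k by auto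
      ultimately have "\<exists>a\<in>I. \<exists>b\<in>I. a \<noteq> b \<and> f a = f b \<and> (\<forall>k\<in>I. f a \<le> f k)"
        using k(1) k0I k0 by blast
      hence "min_twice I f" unfolding min_twice_def by blast
      thus False using assms(2) by blast
    qed
  qed
  thus ?thesis using fin k0I by blast
qed


definition MR :: "'a set \<Rightarrow> nat \<Rightarrow> ('a set \<Rightarrow> ereal) \<Rightarrow> ('a set \<Rightarrow> ereal) \<Rightarrow> bool" where
 "MR E r q s \<longleftrightarrow> (\<forall>S T. S \<subseteq> E \<and> T \<subseteq> E \<and> card S + 1 = r \<and> card T = r + 1 \<longrightarrow>
     min_twice (T - S) (\<lambda>i. q (insert i S) + s (T - {i})))"

lemma tpv_MR: "is_tpv E r p \<Longrightarrow> MR E r p p"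
  unfolding is_tpv_def MR_def by (elim conjE) assumption

lemma tpv_fin: "is_tpv E r p \<Longrightarrow> finite E" unfolding is_tpv_def by simp
lemma tpv_pvec: "is_tpv E r p \<Longrightarrow> trop_pvec E p" unfolding is_tpv_def by simp
lemma tpv_sub: "is_tpv E r p \<Longrightarrow> p S \<noteq> \<infinity> \<Longrightarrow> S \<subseteq> E"
  unfolding is_tpv_def trop_pvec_def by metis
lemma tpv_card: "is_tpv E r p \<Longrightarrow> p S \<noteq> \<infinity> \<Longrightarrow> card S = r"
proof -
  assume a: "is_tpv E r p" "p S \<noteq> \<infinity>"
  hence "S \<subseteq> E" by (rule tpv_sub)
  thus ?thesis using a unfolding is_tpv_def by simp
qed
lemma tpv_nm: "is_tpv E r p \<Longrightarrow> p S \<noteq> -\<infinity>"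
  unfolding is_tpv_def trop_pvec_def by (metis MInfty_neq_PInfty(1))
lemma tpv_ex: "is_tpv E r p \<Longrightarrow> \<exists>S. p S \<noteq> \<infinity>"
  unfolding is_tpv_def by (elim conjE exE) blast
lemma card_minus1:
  assumes "finite B" "a \<in> B" "card B = r"
  shows "card (B - {a}) + 1 = r"
proof -
  have "card B > 0" using assms(1,2) card_gt_0_iff by blast
  thus ?thesis using assms by (simp add: card_Diff_singleton)
qed

lemma ereal_shift_eq:
  fixes a b a' b' :: ereal
  assumes "a \<noteq> \<infinity>" "b \<noteq> \<infinity>" "a' \<noteq> \<infinity>" "b' \<noteq> \<infinity>"
    "a \<noteq> -\<infinity>" "b \<noteq> -\<infinity>" "a' \<noteq> -\<infinity>" "b' \<noteq> -\<infinity>"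
    "a = b + ereal c" "a + b' = a' + b"
  shows "a' = b' + ereal c"
proof -
  obtain x where x: "a = ereal x" using assms(1,5) by (cases a) auto
  obtain y where y: "b = ereal y" using assms(2,6) by (cases b) auto
  obtain x' where x': "a' = ereal x'" using assms(3,7) by (cases a') auto
  obtain y' where y': "b' = ereal y'" using assms(4,8) by (cases b') auto
  show ?thesis using assms(9,10) unfolding x y x' y' by simp
qed

lemma EXCH:
  assumes mr: "MR E r q s" and fE: "finite E"
    and qB: "q B \<noteq> \<infinity>" and sC: "s C \<noteq> \<infinity>" and BE: "B \<subseteq> E" and CE: "C \<subseteq> E"
    and cB: "card B = r" and cC: "card C = r" and aB: "a \<in> B" and aC: "a \<notin> C"
  shows "\<exists>i. i \<in> C \<and> i \<notin> B \<and> q (insert i (B - {a})) \<noteq> \<infinity> \<and> s (insert a (C - {i})) \<noteq> \<infinity>"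
proof -
  define S where "S = B - {a}"
  define T where "T = insert a C"
  have fB: "finite B" and fC: "finite C" using fE BE CE finite_subset by auto
  have cS: "card S + 1 = r" unfolding S_def by (rule card_minus1[OF fB aB cB])
  have cT: "card T = r + 1" unfolding T_def using fC aC cC by simp
  have SE: "S \<subseteq> E" "T \<subseteq> E" unfolding S_def T_def using BE CE aB by auto
  define f where "f i = q (insert i S) + s (T - {i})" for i
  have mt: "min_twice (T - S) f" using mr SE cS cT unfolding MR_def f_def by blast
  have aTS: "a \<in> T - S" unfolding S_def T_def by auto
  have "insert a S = B" unfolding S_def using aB by auto
  moreover have "T - {a} = C" unfolding T_def using aC by auto
  ultimately have fa: "f a = q B + s C" unfolding f_def by simp
  hence "f a \<noteq> \<infinity>" using qB sC by simp
  then obtain i where i: "i \<in> T - S" "i \<noteq> a" "\<forall>k\<in>T - S. f i \<le> f k"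
    using mt_other[OF mt aTS] by blast
  have "f i \<le> f a" using i aTS by blast
  hence "f i \<noteq> \<infinity>" using \<open>f a \<noteq> \<infinity>\<close> by (metis ereal_infty_less_eq(1))
  hence "q (insert i S) \<noteq> \<infinity>" "s (T - {i}) \<noteq> \<infinity>" unfolding f_def by auto
  moreover have "T - {i} = insert a (C - {i})" unfolding T_def using i(2) by auto
  moreover have "i \<in> C" "i \<notin> B" using i unfolding S_def T_def by auto
  ultimately show ?thesis unfolding S_def by auto
qed

lemma ADJ:
  assumes mr: "MR E r q s" and fE: "finite E"
    and qC: "q C \<noteq> \<infinity>" and sC: "s C \<noteq> \<infinity>" and CE: "C \<subseteq> E" and cC: "card C = r"
    and aC: "a \<in> C" and iE: "i \<in> E" and iC: "i \<notin> C"
    and one: "q (insert i (C - {a})) \<noteq> \<infinity> \<or> s (insert i (C - {a})) \<noteq> \<infinity>"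
  shows "q (insert i (C - {a})) \<noteq> \<infinity> \<and> s (insert i (C - {a})) \<noteq> \<infinity> \<and>
         q C + s (insert i (C - {a})) = q (insert i (C - {a})) + s C"
proof -
  define S where "S = C - {a}"
  define T where "T = insert i C"
  have fC: "finite C" using fE CE finite_subset by auto
  have cS: "card S + 1 = r" unfolding S_def by (rule card_minus1[OF fC aC cC])
  have cT: "card T = r + 1" unfolding T_def using fC iC cC by simp
  have SE: "S \<subseteq> E" "T \<subseteq> E" unfolding S_def T_def using CE iE by auto
  define f where "f k = q (insert k S) + s (T - {k})" for k
  have mt: "min_twice (T - S) f" using mr SE cS cT unfolding MR_def f_def by blast
  have ai: "a \<noteq> i" using aC iC by auto
  have TS: "T - S = {a, i}" unfolding S_def T_def using aC iC by auto
  have "f a = f i" using mt unfolding TS using mt_two[OF ai] by blast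
  moreover have "insert a S = C" unfolding S_def using aC by auto
  moreover have "T - {a} = insert i (C - {a})" unfolding T_def using ai by auto
  moreover have "T - {i} = C" unfolding T_def using iC by auto
  ultimately have eq: "q C + s (insert i (C - {a})) = q (insert i (C - {a})) + s C"
    unfolding f_def S_def by simp
  thus ?thesis using one qC sC by auto
qed



lemma subset_card_eq_fin:
  assumes "finite B" "card (C - B) = 0" "finite C" "card C = card B"
  shows "C = B"
proof -
  have "C - B = {}" using assms(2,3) by simp
  hence "C \<subseteq> B" by blast
  thus ?thesis using assms(1,4) card_subset_eq by blast
qed

lemma card_swap:
  assumes "finite C" "a \<in> C" "a \<notin> B" "i \<in> B" "card (C - B) = Suc d"
  shows "card (insert i (C - {a}) - B) = d"
proof -
  have "insert i (C - {a}) - B = (C - B) - {a}" using assms(4) by auto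
  moreover have "a \<in> C - B" using assms by auto
  ultimately show ?thesis using assms(1,5) by (simp add: card_Diff_singleton)
qed

lemma common_basis:
  assumes tq: "is_tpv E r q" and ts: "is_tpv E r s" and mr: "MR E r q s" and sC: "s C \<noteq> \<infinity>"
  shows "\<forall>B. card (B - C) = d \<longrightarrow> q B \<noteq> \<infinity> \<longrightarrow> (\<exists>C'. q C' \<noteq> \<infinity> \<and> s C' \<noteq> \<infinity>)"
proof (induction d)
  case 0
  show ?case
  proof (intro allI impI)
    fix B assume h: "card (B - C) = 0" "q B \<noteq> \<infinity>"
    have fE: "finite E" using tq by (rule tpv_fin)
    have "B \<subseteq> E" "C \<subseteq> E" using tpv_sub[OF tq h(2)] tpv_sub[OF ts sC] by auto
    hence "finite B" "finite C" using fE finite_subset by auto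
    moreover have "card B = card C" using tpv_card[OF tq h(2)] tpv_card[OF ts sC] by simp
    ultimately have "B = C" using subset_card_eq_fin h(1) by metis
    thus "\<exists>C'. q C' \<noteq> \<infinity> \<and> s C' \<noteq> \<infinity>" using h(2) sC by blast
  qed
next
  case (Suc d)
  show ?case
  proof (intro allI impI)
    fix B assume h: "card (B - C) = Suc d" "q B \<noteq> \<infinity>"
    have fE: "finite E" using tq by (rule tpv_fin)
    have BE: "B \<subseteq> E" and CE: "C \<subseteq> E" using tpv_sub[OF tq h(2)] tpv_sub[OF ts sC] by auto
    hence fB: "finite B" using fE finite_subset by auto
    have "B - C \<noteq> {}" using h(1) by (metis card.empty Zero_not_Suc)
    then obtain a where a: "a \<in> B" "a \<notin> C" by auto
    obtain i where i: "i \<in> C" "i \<notin> B" "q (insert i (B - {a})) \<noteq> \<infinity>"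
      using EXCH[OF mr fE h(2) sC BE CE tpv_card[OF tq h(2)] tpv_card[OF ts sC] a] by blast
    have "card (insert i (B - {a}) - C) = d" by (rule card_swap[OF fB a i(1) h(1)])
    thus "\<exists>C'. q C' \<noteq> \<infinity> \<and> s C' \<noteq> \<infinity>" using Suc.IH i(3) by blast
  qed
qed

lemma eq_step:
  assumes tq: "is_tpv E r q" and ts: "is_tpv E r s" and mr: "MR E r q s"
  shows "\<forall>C B. card (C - B) = d \<longrightarrow> q C \<noteq> \<infinity> \<longrightarrow> s C \<noteq> \<infinity> \<longrightarrow> q C = s C + ereal c \<longrightarrow>
           (q B \<noteq> \<infinity> \<or> s B \<noteq> \<infinity>) \<longrightarrow> (q B \<noteq> \<infinity> \<and> s B \<noteq> \<infinity> \<and> q B = s B + ereal c)"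
proof (induction d)
  case 0
  show ?case
  proof (intro allI impI)
    fix C B assume h: "card (C - B) = 0" "q C \<noteq> \<infinity>" "s C \<noteq> \<infinity>" "q C = s C + ereal c"
      "q B \<noteq> \<infinity> \<or> s B \<noteq> \<infinity>"
    have fE: "finite E" using tq by (rule tpv_fin)
    have cB: "card B = r" and BE: "B \<subseteq> E" using h(5) tpv_card[OF tq] tpv_card[OF ts] tpv_sub[OF tq] tpv_sub[OF ts] by metis+
    have "C \<subseteq> E" "card C = r" using tpv_sub[OF tq h(2)] tpv_card[OF tq h(2)] by auto
    hence "C = B" using subset_card_eq_fin[of B C] h(1) BE cB fE finite_subset by metis
    thus "q B \<noteq> \<infinity> \<and> s B \<noteq> \<infinity> \<and> q B = s B + ereal c" using h by simp
  qed
next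
  case (Suc d)
  show ?case
  proof (intro allI impI)
    fix C B assume h: "card (C - B) = Suc d" "q C \<noteq> \<infinity>" "s C \<noteq> \<infinity>" "q C = s C + ereal c"
      "q B \<noteq> \<infinity> \<or> s B \<noteq> \<infinity>"
    have fE: "finite E" using tq by (rule tpv_fin)
    have cB: "card B = r" and BE: "B \<subseteq> E" using h(5) tpv_card[OF tq] tpv_card[OF ts] tpv_sub[OF tq] tpv_sub[OF ts] by metis+
    have CE: "C \<subseteq> E" and cC: "card C = r" using tpv_sub[OF tq h(2)] tpv_card[OF tq h(2)] by auto
    hence fC: "finite C" using fE finite_subset by auto
    have "C - B \<noteq> {}" using h(1) by (metis card.empty Zero_not_Suc)
    then obtain a where a: "a \<in> C" "a \<notin> B" by auto
    obtain i where i: "i \<in> B" "i \<notin> C" "q (insert i (C - {a})) \<noteq> \<infinity> \<or> s (insert i (C - {a})) \<noteq> \<infinity>"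
    proof (cases "q B \<noteq> \<infinity>")
      case True
      obtain i where "i \<in> B" "i \<notin> C" "q (insert i (C - {a})) \<noteq> \<infinity>"
        using EXCH[OF tpv_MR[OF tq] fE h(2) True CE BE cC cB a] by blast
      thus ?thesis using that by blast
    next
      case False
      hence sB: "s B \<noteq> \<infinity>" using h(5) by blast
      obtain i where "i \<in> B" "i \<notin> C" "s (insert i (C - {a})) \<noteq> \<infinity>"
        using EXCH[OF tpv_MR[OF ts] fE h(3) sB CE BE cC cB a] by blast
      thus ?thesis using that by blast
    qed
    have iE: "i \<in> E" using i(1) BE by auto
    have adj: "q (insert i (C - {a})) \<noteq> \<infinity> \<and> s (insert i (C - {a})) \<noteq> \<infinity> \<and>
         q C + s (insert i (C - {a})) = q (insert i (C - {a})) + s C"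
      by (rule ADJ[OF mr fE h(2) h(3) CE cC a(1) iE i(2) i(3)])
    have eq': "q (insert i (C - {a})) = s (insert i (C - {a})) + ereal c"
      using ereal_shift_eq[OF h(2) h(3) _ _ tpv_nm[OF tq] tpv_nm[OF ts] tpv_nm[OF tq] tpv_nm[OF ts] h(4)]
        adj by blast
    have "card (insert i (C - {a}) - B) = d" by (rule card_swap[OF fC a i(1) h(1)])
    thus "q B \<noteq> \<infinity> \<and> s B \<noteq> \<infinity> \<and> q B = s B + ereal c"
      using Suc.IH adj eq' h(5) by blast
  qed
qed

lemma EQ:
  assumes tq: "is_tpv E r q" and ts: "is_tpv E r s" and mr: "MR E r q s"
  shows "\<exists>c::real. \<forall>S. q S = s S + ereal c"
proof -
  obtain C where sC: "s C \<noteq> \<infinity>" using tpv_ex[OF ts] by blast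
  obtain B where qB: "q B \<noteq> \<infinity>" using tpv_ex[OF tq] by blast
  obtain C0 where q0: "q C0 \<noteq> \<infinity>" and s0: "s C0 \<noteq> \<infinity>"
    using common_basis[OF tq ts mr sC] qB by blast
  define c where "c = real_of_ereal (q C0) - real_of_ereal (s C0)"
  have c0: "q C0 = s C0 + ereal c"
  proof -
    obtain x where x: "q C0 = ereal x" using q0 tpv_nm[OF tq] by (cases "q C0") auto
    obtain y where y: "s C0 = ereal y" using s0 tpv_nm[OF ts] by (cases "s C0") auto
    show ?thesis unfolding c_def x y by simp
  qed
  have "\<forall>S. q S = s S + ereal c"
  proof
    fix S
    show "q S = s S + ereal c"
    proof (cases "q S \<noteq> \<infinity> \<or> s S \<noteq> \<infinity>")
      case True
      thus ?thesis using eq_step[OF tq ts mr, of "card (C0 - S)" c] q0 s0 c0 by blast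
    next
      case False thus ?thesis by simp
    qed
  qed
  thus ?thesis by blast
qed



lemma mt_cong: "(\<And>k. k \<in> I \<Longrightarrow> f k = g k) \<Longrightarrow> min_twice I f \<longleftrightarrow> min_twice I g"
  unfolding min_twice_def by (simp cong: ball_cong bex_cong conj_cong)

lemma MR_D: "MR E r q s \<Longrightarrow> S \<subseteq> E \<Longrightarrow> T \<subseteq> E \<Longrightarrow> card S + 1 = r \<Longrightarrow> card T = r + 1 \<Longrightarrow>
   min_twice (T - S) (\<lambda>i. q (insert i S) + s (T - {i}))"
  unfolding MR_def by simp

lemma fin_ereal: "(x::ereal) \<noteq> \<infinity> \<Longrightarrow> x \<noteq> -\<infinity> \<Longrightarrow> x = ereal (real_of_ereal x)"
  by (cases x) auto

lemma tls_vec: "z \<in> tls E r p \<Longrightarrow> trop_vec E z"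
  unfolding tls_def tperp_def by simp

lemma tls_orth: "z \<in> tls E r p \<Longrightarrow> x \<in> pl_circuits E r p \<Longrightarrow> torth E x z"
  unfolding tls_def tperp_def by simp

lemma vec_nm: "trop_vec E z \<Longrightarrow> z k \<noteq> -\<infinity>"
  unfolding trop_vec_def by (cases "k \<in> E") auto

lemma vec_E: "trop_vec E z \<Longrightarrow> z k \<noteq> \<infinity> \<Longrightarrow> k \<in> E"
  unfolding trop_vec_def by (cases "k \<in> E") auto

lemma circ_in:
  assumes "T \<subseteq> E" "card T = r + 1" "dvec p T k \<noteq> \<infinity>"
  shows "(\<lambda>i. dvec p T i + ereal c) \<in> pl_circuits E r p"
proof -
  have "(\<lambda>i. dvec p T i + ereal c) k \<noteq> \<infinity>" using assms(3) by simp
  thus ?thesis unfolding pl_circuits_def using assms(1,2) by blast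
qed

lemma cocirc_in:
  assumes tp: "is_tpv E r p" and SE: "S \<subseteq> E" and cS: "card S + 1 = r"
  shows "(\<lambda>k. p (insert k S)) \<in> tls E r p"
proof -
  have pv: "trop_pvec E p" using tp by (rule tpv_pvec)
  have tv: "trop_vec E (\<lambda>k. p (insert k S))"
    unfolding trop_vec_def
  proof (intro conjI allI ballI impI)
    fix k show "p (insert k S) \<noteq> -\<infinity>" by (rule tpv_nm[OF tp])
  next
    fix k assume "k \<notin> E"
    hence "\<not> insert k S \<subseteq> E" by simp
    thus "p (insert k S) = \<infinity>" using pv unfolding trop_pvec_def by simp
  qed
  have pS: "p S = \<infinity>"
  proof (rule ccontr)
    assume "p S \<noteq> \<infinity>" hence "card S = r" by (rule tpv_card[OF tp])
    thus False using cS by simp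
  qed
  have "torth E x (\<lambda>k. p (insert k S))" if x: "x \<in> pl_circuits E r p" for x
  proof -
    obtain T c where T: "T \<subseteq> E" "card T = r + 1" and xe: "x = (\<lambda>i. dvec p T i + ereal c)"
      using x unfolding pl_circuits_def by blast
    have "torth E x (\<lambda>k. p (insert k S)) \<longleftrightarrow>
          min_twice E (\<lambda>k. (dvec p T k + p (insert k S)) + ereal c)"
      unfolding torth_def xe by (simp add: ac_simps)
    also have "\<dots> \<longleftrightarrow> min_twice E (\<lambda>k. dvec p T k + p (insert k S))" by (rule mt_shift)
    also have "\<dots> \<longleftrightarrow> min_twice (T - S) (\<lambda>k. dvec p T k + p (insert k S))"
    proof (rule mt_restrict)
      show "T - S \<subseteq> E" using T by auto
    next
      fix k assume k: "k \<in> E" "k \<notin> T - S"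
      show "dvec p T k + p (insert k S) = \<infinity>"
      proof (cases "k \<in> T")
        case False thus ?thesis unfolding dvec_def by simp
      next
        case True hence "k \<in> S" using k by auto
        hence "insert k S = S" by auto
        thus ?thesis using pS by simp
      qed
    qed
    also have "\<dots> \<longleftrightarrow> min_twice (T - S) (\<lambda>k. p (insert k S) + p (T - {k}))"
      by (rule mt_cong) (simp add: dvec_def add.commute)
    finally show ?thesis using MR_D[OF tpv_MR[OF tp] SE T(1) cS T(2)] by simp
  qed
  thus ?thesis unfolding tls_def tperp_def using tv by blast
qed



lemma sum_swap:
  fixes f :: "'a \<Rightarrow> real"
  assumes "finite A" "j \<in> A" "i \<notin> A"
  shows "sum f (insert i (A - {j})) = sum f A - f j + f i"
proof -
  have "i \<notin> A - {j}" using assms(3) by simp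
  hence "sum f (insert i (A - {j})) = f i + sum f (A - {j})" using assms(1) by simp
  also have "sum f (A - {j}) = sum f A - f j" using assms(1,2) by (simp add: sum_diff1)
  finally show ?thesis by simp
qed

lemma card_swap2:
  assumes "finite A" "j \<in> A" "i \<notin> A"
  shows "card (insert i (A - {j})) = card A"
proof -
  have "i \<notin> A - {j}" using assms(3) by simp
  hence "card (insert i (A - {j})) = Suc (card (A - {j}))" using assms(1) by simp
  also have "\<dots> = card A"
  proof -
    have "card A > 0" using assms(1,2) card_gt_0_iff by blast
    thus ?thesis using assms(1,2) by (simp add: card_Diff_singleton)
  qed
  finally show ?thesis .
qed

lemma SUP:
  assumes tp: "is_tpv E r p" and z: "z \<in> tls E r p" and zi: "z i \<noteq> \<infinity>"
  shows "\<exists>S. S \<subseteq> E \<and> card S + 1 = r \<and> i \<notin> S \<and> p (insert i S) \<noteq> \<infinity> \<and>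
           (\<forall>j. p (insert i S) + z j \<le> p (insert j S) + z i)"
proof -
  have fE: "finite E" using tp by (rule tpv_fin)
  have tz: "trop_vec E z" using z by (rule tls_vec)
  have iE: "i \<in> E" using vec_E[OF tz zi] .
  define F where "F = {j\<in>E. z j \<noteq> \<infinity>}"
  have iF: "i \<in> F" unfolding F_def using iE zi by simp
  define zr where "zr j = real_of_ereal (z j)" for j
  define Bs where "Bs = {B. B \<subseteq> E \<and> p B \<noteq> \<infinity>}"
  have fBs: "finite Bs" unfolding Bs_def using fE by simp
  have neBs: "Bs \<noteq> {}" using tpv_ex[OF tp] tpv_sub[OF tp] unfolding Bs_def by blast
  define k0 where "k0 = Min ((\<lambda>B. card (B \<inter> F)) ` Bs)"
  have k0le: "k0 \<le> card (B \<inter> F)" if "B \<in> Bs" for B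
    unfolding k0_def using fBs that by simp
  have "k0 \<in> (\<lambda>B. card (B \<inter> F)) ` Bs" unfolding k0_def using fBs neBs by (intro Min_in) auto
  define B0s where "B0s = {B\<in>Bs. card (B \<inter> F) = k0}"
  have fB0s: "finite B0s" unfolding B0s_def using fBs by simp
  have neB0s: "B0s \<noteq> {}" unfolding B0s_def using \<open>k0 \<in> _\<close> by auto
  define phi where "phi B = real_of_ereal (p B) - (\<Sum>j\<in>B \<inter> F. zr j)" for B
  define m where "m = Min (phi ` B0s)"
  have mle: "m \<le> phi B" if "B \<in> B0s" for B unfolding m_def using fB0s that by simp
  have "m \<in> phi ` B0s" unfolding m_def using fB0s neB0s by (intro Min_in) auto
  then obtain B1 where B1: "B1 \<in> B0s" "phi B1 = m" by auto
  have Bfacts: "B \<subseteq> E \<and> p B \<noteq> \<infinity> \<and> card B = r \<and> finite B" if "B \<in> Bs" for B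
    using that tpv_card[OF tp] fE finite_subset unfolding Bs_def by blast
  have pfin: "p B = ereal (real_of_ereal (p B))" if "B \<in> Bs" for B
    using fin_ereal[of "p B"] Bfacts[OF that] tpv_nm[OF tp] by blast
  have zfin: "z j = ereal (zr j)" if "j \<in> F" for j
    using fin_ereal[of "z j"] vec_nm[OF tz] that unfolding F_def zr_def by blast
  have fF: "finite (B \<inter> F)" if "B \<in> Bs" for B using Bfacts[OF that] by simp
  obtain B where B: "B \<in> B0s" "phi B = m" "i \<in> B"
  proof (cases "i \<in> B1")
    case True thus ?thesis using that B1 by blast
  next
    case False
    have B1s: "B1 \<in> Bs" using B1 unfolding B0s_def by simp
    note bf = Bfacts[OF B1s]
    define T where "T = insert i B1"
    have TE: "T \<subseteq> E" unfolding T_def using bf iE by simp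
    have cT: "card T = r + 1" unfolding T_def using bf False by simp
    have dTi: "dvec p T i = p B1" unfolding dvec_def T_def using False by simp
    have circ: "(\<lambda>k. dvec p T k + ereal 0) \<in> pl_circuits E r p"
      by (rule circ_in[OF TE cT, where k = i]) (simp add: dTi bf)
    have mt: "min_twice E (\<lambda>k. (dvec p T k + ereal 0) + z k)"
      using tls_orth[OF z circ] unfolding torth_def by simp
    have gi: "(dvec p T i + ereal 0) + z i \<noteq> \<infinity>" using dTi bf zi by simp
    obtain j where j: "j \<in> E" "j \<noteq> i" "\<forall>k\<in>E. (dvec p T j + ereal 0) + z j \<le> (dvec p T k + ereal 0) + z k"
      using mt_other[OF mt iE gi] by blast
    have le: "dvec p T j + z j \<le> p B1 + z i" using j(3) iE dTi by (metis add.right_neutral zero_ereal_def)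
    hence fj: "dvec p T j + z j \<noteq> \<infinity>" using bf zi by (metis ereal_infty_less_eq(1) ereal_plus_eq_PInfty)
    hence jT: "j \<in> T" unfolding dvec_def by (cases "j \<in> T") auto
    hence jB: "j \<in> B1" unfolding T_def using j(2) by simp
    have dj: "dvec p T j = p (T - {j})" unfolding dvec_def using jT by simp
    have pT: "p (T - {j}) \<noteq> \<infinity>" and zj: "z j \<noteq> \<infinity>" using fj dj by auto
    have jF: "j \<in> F" unfolding F_def using j(1) zj by simp
    define B' where "B' = T - {j}"
    have B'eq: "B' = insert i (B1 - {j})" unfolding B'_def T_def using j(2) by auto
    have B's: "B' \<in> Bs" unfolding Bs_def B'_def using TE pT by auto
    have iB1F: "i \<notin> B1 \<inter> F" using False by simp
    have jB1F: "j \<in> B1 \<inter> F" using jB jF by simp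
    have B'F: "B' \<inter> F = insert i ((B1 \<inter> F) - {j})" unfolding B'eq using iF by auto
    have "card (B' \<inter> F) = card (B1 \<inter> F)" unfolding B'F
      by (rule card_swap2[OF fF[OF B1s] jB1F iB1F])
    hence B'0: "B' \<in> B0s" using B1(1) B's unfolding B0s_def by simp
    have sumeq: "(\<Sum>k\<in>B' \<inter> F. zr k) = (\<Sum>k\<in>B1 \<inter> F. zr k) - zr j + zr i"
      unfolding B'F by (rule sum_swap[OF fF[OF B1s] jB1F iB1F])
    have "ereal (real_of_ereal (p B')) + ereal (zr j) \<le> ereal (real_of_ereal (p B1)) + ereal (zr i)"
      using le dj B'_def pfin[OF B's] pfin[OF B1s] zfin[OF jF] zfin[OF iF] by simp
    hence rle: "real_of_ereal (p B') + zr j \<le> real_of_ereal (p B1) + zr i" by simp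
    have "phi B' \<le> phi B1" unfolding phi_def sumeq using rle by simp
    hence "phi B' = m" using mle[OF B'0] B1(2) by simp
    moreover have "i \<in> B'" unfolding B'eq by simp
    ultimately show ?thesis using that B'0 by blast
  qed
  have Bs: "B \<in> Bs" using B unfolding B0s_def by simp
  note bf = Bfacts[OF Bs]
  have ck: "card (B \<inter> F) = k0" using B unfolding B0s_def by simp
  define S where "S = B - {i}"
  have SE: "S \<subseteq> E" unfolding S_def using bf by auto
  have cS: "card S + 1 = r" unfolding S_def by (rule card_minus1) (use bf B in auto)
  have iS: "i \<notin> S" unfolding S_def by simp
  have iSB: "insert i S = B" unfolding S_def using B by auto
  have pS: "p S = \<infinity>"
  proof (rule ccontr)
    assume "p S \<noteq> \<infinity>" hence "card S = r" by (rule tpv_card[OF tp])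
    thus False using cS by simp
  qed
  have main: "p B + z j \<le> p (insert j S) + z i" for j
  proof (cases "j = i")
    case True thus ?thesis using iSB by simp
  next
    case ji: False
    show ?thesis
    proof (cases "j \<in> S")
      case True
      hence "insert j S = S" by auto
      thus ?thesis using pS zi by simp
    next
      case jS: False
      hence jB: "j \<notin> B" using ji unfolding S_def by auto
      show ?thesis
      proof (cases "p (insert j S) = \<infinity>")
        case True thus ?thesis using zi by simp
      next
        case pj: False
        define B' where "B' = insert j S"
        have B's: "B' \<in> Bs" unfolding Bs_def B'_def using tpv_sub[OF tp pj] pj by simp
        have B'eq: "B' = insert j (B - {i})" unfolding B'_def S_def by simp
        have iBF: "i \<in> B \<inter> F" using B iF by simp
        show ?thesis
        proof (cases "j \<in> F")
          case False
          have "B' \<inter> F = (B \<inter> F) - {i}" unfolding B'eq using False by auto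
          hence "card (B' \<inter> F) = k0 - 1" using ck fF[OF Bs] iBF by (simp add: card_Diff_singleton)
          moreover have "k0 > 0" using ck fF[OF Bs] iBF card_gt_0_iff by blast
          ultimately have "card (B' \<inter> F) < k0" by simp
          thus ?thesis using k0le[OF B's] by simp
        next
          case jF: True
          have jBF: "j \<notin> B \<inter> F" using jB by simp
          have B'F: "B' \<inter> F = insert j ((B \<inter> F) - {i})" unfolding B'eq using jF by auto
          have "card (B' \<inter> F) = k0" unfolding B'F ck[symmetric]
            by (rule card_swap2[OF fF[OF Bs] iBF jBF])
          hence B'0: "B' \<in> B0s" unfolding B0s_def using B's by simp
          have sumeq: "(\<Sum>k\<in>B' \<inter> F. zr k) = (\<Sum>k\<in>B \<inter> F. zr k) - zr i + zr j"
            unfolding B'F by (rule sum_swap[OF fF[OF Bs] iBF jBF])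
          have "phi B \<le> phi B'" using mle[OF B'0] B(2) by simp
          hence rle: "real_of_ereal (p B) + zr j \<le> real_of_ereal (p B') + zr i"
            unfolding phi_def sumeq by simp
          have "ereal (real_of_ereal (p B)) + ereal (zr j) \<le> ereal (real_of_ereal (p B')) + ereal (zr i)"
            using rle by simp
          thus ?thesis using pfin[OF Bs] pfin[OF B's] zfin[OF jF] zfin[OF iF] unfolding B'_def
            by simp
        qed
      qed
    qed
  qed
  show ?thesis
    apply (rule exI[of _ S])
    using SE cS iS iSB bf main by simp
qed


lemma ereal_aux:
  fixes u v :: ereal
  assumes "ereal P + u \<le> v + ereal Z"
  shows "u \<le> v + ereal (Z - P)"
  using assms by (cases u; cases v) auto

lemma ORTH:
  assumes tp: "is_tpv E r p" and z: "z \<in> tls E r p" and ty: "trop_vec E y"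
    and Y: "\<And>U. U \<subseteq> E \<Longrightarrow> card U + 1 = r \<Longrightarrow> torth E (\<lambda>k. p (insert k U)) y"
  shows "torth E z y"
proof (rule ccontr)
  assume nt: "\<not> torth E z y"
  have fE: "finite E" using tp by (rule tpv_fin)
  have tz: "trop_vec E z" using z by (rule tls_vec)
  obtain k0 where k0: "k0 \<in> E" "z k0 + y k0 \<noteq> \<infinity>" "\<forall>k\<in>E. k \<noteq> k0 \<longrightarrow> z k0 + y k0 < z k + y k"
    using mt_unique[OF fE nt[unfolded torth_def]] by blast
  have zk0: "z k0 \<noteq> \<infinity>" and yk0: "y k0 \<noteq> \<infinity>" using k0(2) by auto
  obtain S where S: "S \<subseteq> E" "card S + 1 = r" "p (insert k0 S) \<noteq> \<infinity>"
     "\<forall>j. p (insert k0 S) + z j \<le> p (insert j S) + z k0"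
    using SUP[OF tp z zk0] by blast
  define P where "P = real_of_ereal (p (insert k0 S))"
  define Z where "Z = real_of_ereal (z k0)"
  have pP: "p (insert k0 S) = ereal P" unfolding P_def
    by (rule fin_ereal[OF S(3) tpv_nm[OF tp]])
  have zZ: "z k0 = ereal Z" unfolding Z_def by (rule fin_ereal[OF zk0 vec_nm[OF tz]])
  obtain Yv where yY: "y k0 = ereal Yv" using yk0 vec_nm[OF ty, of k0] by (cases "y k0") auto
  define g where "g k = (p (insert k S) + y k) + ereal (Z - P)" for k
  have mtg: "min_twice E g" unfolding g_def mt_shift using Y[OF S(1,2)] unfolding torth_def .
  have ge: "z k + y k \<le> g k" for k
  proof -
    have "ereal P + z k \<le> p (insert k S) + ereal Z" using S(4) pP zZ by metis
    hence "z k \<le> p (insert k S) + ereal (Z - P)" by (rule ereal_aux)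
    hence "z k + y k \<le> (p (insert k S) + ereal (Z - P)) + y k" by (rule add_right_mono)
    thus ?thesis unfolding g_def by (simp add: ac_simps)
  qed
  have gk0: "g k0 = z k0 + y k0" unfolding g_def pP zZ yY by simp
  hence gfin: "g k0 \<noteq> \<infinity>" using k0(2) by simp
  obtain j where j: "j \<in> E" "j \<noteq> k0" "\<forall>k\<in>E. g j \<le> g k"
    using mt_other[OF mtg k0(1) gfin] by blast
  have "z j + y j \<le> g j" by (rule ge)
  also have "g j \<le> g k0" using j(3) k0(1) by simp
  also have "\<dots> = z k0 + y k0" by (rule gk0)
  finally have "z j + y j \<le> z k0 + y k0" .
  moreover have "z k0 + y k0 < z j + y j" using k0(3) j(1,2) by simp
  ultimately show False by simp
qed



lemma star_star[simp]: "star (star i) = i" by (cases i) auto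

lemma inj_star: "inj star"
proof (rule injI)
  fix x y assume "star x = star y"
  hence "star (star x) = star (star y)" by simp
  thus "x = y" by simp
qed

lemma star_J: "star i \<in> J n \<longleftrightarrow> i \<in> J n"
  by (cases i) (auto simp: J_def)

lemma star_img_img[simp]: "star ` star ` S = S"
  by (simp add: image_comp comp_def)

lemma star_img_J: "star ` S \<subseteq> J n \<longleftrightarrow> S \<subseteq> J n"
  unfolding image_subset_iff[of star S "J n"] by (simp add: star_J subset_eq)

lemma star_in_img: "star k \<in> S \<longleftrightarrow> k \<in> star ` S"
proof
  assume "star k \<in> S" thus "k \<in> star ` S" by (intro image_eqI[of _ _ "star k"]) simp_all
next
  assume "k \<in> star ` S" then obtain x where "x \<in> S" "k = star x" by auto
  thus "star k \<in> S" by simp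
qed

lemma card_star[simp]: "card (star ` S) = card S"
  using inj_star by (simp add: card_image inj_on_def inj_def)

lemma star_img_J_eq: "star ` J n = J n"
proof -
  have "star ` J n \<subseteq> J n" by (simp add: image_subset_iff star_J)
  moreover have "J n \<subseteq> star ` J n"
  proof
    fix x assume "x \<in> J n"
    thus "x \<in> star ` J n" by (intro image_eqI[of _ _ "star x"]) (simp_all add: star_J)
  qed
  ultimately show ?thesis by (rule subset_antisym)
qed

lemma star_diff: "star ` (A - B) = star ` A - star ` B"
  using inj_star by (simp add: image_set_diff)

lemma star_insert: "star ` insert k S = insert (star k) (star ` S)" by simp

lemma bij_star: "bij_betw star A (star ` A)"
  using inj_star by (simp add: bij_betw_def inj_on_def inj_def)

lemma bij_star_J: "bij_betw star (J n) (J n)"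
  using bij_star[of "J n"] star_img_J_eq by simp

lemma fin_J: "finite (J n)" unfolding J_def by simp

lemma card_J: "card (J n) = 2 * n"
proof -
  have "card (Pl ` {1..n}) = n" by (simp add: card_image inj_on_def)
  moreover have "card (St ` {1..n}) = n" by (simp add: card_image inj_on_def)
  moreover have "Pl ` {1..n} \<inter> St ` {1..n} = {}" by auto
  ultimately show ?thesis unfolding J_def by (simp add: card_Un_disjoint)
qed

lemma reflect_reflect[simp]: "reflect (reflect x) = x"
  unfolding reflect_def by simp

lemma reflect_vec: "trop_vec (J n) x \<Longrightarrow> trop_vec (J n) (reflect x)"
  unfolding trop_vec_def reflect_def by (simp add: star_J)



lemma tpv_q:
  assumes tp: "is_tpv (J n) n p"
  shows "is_tpv (J n) n (\<lambda>S. p (star ` S))"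
proof -
  let ?E = "J n"
  have pv: "trop_pvec ?E p" using tp by (rule tpv_pvec)
  have A: "trop_pvec ?E (\<lambda>S. p (star ` S))"
    unfolding trop_pvec_def
  proof (intro conjI allI impI)
    fix S show "p (star ` S) \<noteq> -\<infinity>" by (rule tpv_nm[OF tp])
  next
    fix S assume "\<not> S \<subseteq> ?E"
    hence "\<not> star ` S \<subseteq> ?E" using star_img_J by metis
    thus "p (star ` S) = \<infinity>" using pv unfolding trop_pvec_def by simp
  qed
  obtain B where B: "p B \<noteq> \<infinity>" using tpv_ex[OF tp] by blast
  have BE: "B \<subseteq> ?E" using tpv_sub[OF tp B] .
  have Bx: "\<exists>S. S \<subseteq> ?E \<and> p (star ` S) \<noteq> \<infinity>"
  proof (intro exI conjI)
    show "star ` B \<subseteq> ?E" using BE star_img_J by metis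
    show "p (star ` star ` B) \<noteq> \<infinity>" using B by simp
  qed
  have C: "\<forall>S. S \<subseteq> ?E \<and> p (star ` S) \<noteq> \<infinity> \<longrightarrow> card S = n"
  proof (intro allI impI)
    fix S assume "S \<subseteq> ?E \<and> p (star ` S) \<noteq> \<infinity>"
    hence "card (star ` S) = n" using tpv_card[OF tp] by blast
    thus "card S = n" by simp
  qed
  have D: "\<forall>S T. S \<subseteq> ?E \<and> T \<subseteq> ?E \<and> card S + 1 = n \<and> card T = n + 1 \<longrightarrow>
        min_twice (T - S) (\<lambda>i. p (star ` insert i S) + p (star ` (T - {i})))"
  proof (intro allI impI)
    fix S T assume h: "S \<subseteq> ?E \<and> T \<subseteq> ?E \<and> card S + 1 = n \<and> card T = n + 1"
    have SE: "star ` S \<subseteq> ?E" and TE: "star ` T \<subseteq> ?E" using h star_img_J by metis+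
    have mt: "min_twice (star ` T - star ` S) (\<lambda>i. p (insert i (star ` S)) + p (star ` T - {i}))"
      by (rule MR_D[OF tpv_MR[OF tp] SE TE]) (use h in simp_all)
    have bij: "bij_betw star (T - S) (star ` T - star ` S)"
      using bij_star[of "T - S"] by (simp add: star_diff)
    have "min_twice (T - S) (\<lambda>k. p (insert (star k) (star ` S)) + p (star ` T - {star k}))"
      using mt mt_reindex[OF bij] by simp
    thus "min_twice (T - S) (\<lambda>i. p (star ` insert i S) + p (star ` (T - {i})))"
      by (simp add: star_diff)
  qed
  show ?thesis unfolding is_tpv_def using fin_J A Bx C D by simp
qed

lemma tpv_ps:
  assumes tp: "is_tpv (J n) n p"
  shows "is_tpv (J n) n (\<lambda>S. if S \<subseteq> J n then p (J n - S) else \<infinity>)"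
proof -
  let ?E = "J n"
  let ?ps = "\<lambda>S. if S \<subseteq> J n then p (J n - S) else \<infinity>"
  have cE: "card ?E = 2 * n" by (rule card_J)
  have fE: "finite ?E" by (rule fin_J)
  have A: "trop_pvec ?E ?ps"
    unfolding trop_pvec_def
  proof (intro conjI allI impI)
    fix S assume "S \<subseteq> ?E" thus "?ps S \<noteq> -\<infinity>" using tpv_nm[OF tp] by simp
  next
    fix S assume "\<not> S \<subseteq> ?E" thus "?ps S = \<infinity>" by simp
  qed
  obtain B where B: "p B \<noteq> \<infinity>" using tpv_ex[OF tp] by blast
  have BE: "B \<subseteq> ?E" using tpv_sub[OF tp B] .
  have Bx: "\<exists>S. S \<subseteq> ?E \<and> ?ps S \<noteq> \<infinity>"
  proof (intro exI conjI)
    show "?E - B \<subseteq> ?E" by blast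
    have "?E - (?E - B) = B" using BE by blast
    thus "?ps (?E - B) \<noteq> \<infinity>" using B by simp
  qed
  have C: "\<forall>S. S \<subseteq> ?E \<and> ?ps S \<noteq> \<infinity> \<longrightarrow> card S = n"
  proof (intro allI impI)
    fix S assume h: "S \<subseteq> ?E \<and> ?ps S \<noteq> \<infinity>"
    have h1: "S \<subseteq> ?E" using h by (rule conjunct1)
    have h2: "?ps S \<noteq> \<infinity>" using h by (rule conjunct2)
    have "?ps S = p (?E - S)" using h1 by (rule if_P)
    hence "p (?E - S) \<noteq> \<infinity>" using h2 by simp
    hence "card (?E - S) = n" using tpv_card[OF tp] by blast
    moreover have "card (?E - S) = card ?E - card S" using card_Diff_subset[OF finite_subset[OF h1 fE] h1] .
    moreover have "card S \<le> card ?E" using card_mono[OF fE h1] .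
    ultimately show "card S = n" using cE by simp
  qed
  have D: "\<forall>S T. S \<subseteq> ?E \<and> T \<subseteq> ?E \<and> card S + 1 = n \<and> card T = n + 1 \<longrightarrow>
        min_twice (T - S) (\<lambda>i. ?ps (insert i S) + ?ps (T - {i}))"
  proof (intro allI impI)
    fix S T assume h: "S \<subseteq> ?E \<and> T \<subseteq> ?E \<and> card S + 1 = n \<and> card T = n + 1"
    have S'E: "?E - T \<subseteq> ?E" and T'E: "?E - S \<subseteq> ?E" by auto
    have cT': "card (?E - T) + 1 = n"
    proof -
      have hT: "T \<subseteq> ?E" using h by simp
      have "card (?E - T) = card ?E - card T" using card_Diff_subset[OF finite_subset[OF hT fE] hT] .
      moreover have "card T \<le> card ?E" using card_mono[OF fE hT] .
      moreover have "card T = Suc n" using h by simp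
      ultimately show ?thesis using cE by linarith
    qed
    have cS': "card (?E - S) = n + 1"
    proof -
      have hS: "S \<subseteq> ?E" using h by simp
      have "card (?E - S) = card ?E - card S" using card_Diff_subset[OF finite_subset[OF hS fE] hS] .
      moreover have "card S \<le> card ?E" using card_mono[OF fE hS] .
      moreover have "Suc (card S) = n" using h by simp
      ultimately show ?thesis using cE by linarith
    qed
    have mt: "min_twice ((?E - S) - (?E - T)) (\<lambda>i. p (insert i (?E - T)) + p ((?E - S) - {i}))"
      by (rule MR_D[OF tpv_MR[OF tp] S'E T'E cT' cS'])
    have eqs: "(?E - S) - (?E - T) = T - S" using h by blast
    show "min_twice (T - S) (\<lambda>i. ?ps (insert i S) + ?ps (T - {i}))"
    proof -
      have "min_twice (T - S) (\<lambda>i. p (insert i (?E - T)) + p ((?E - S) - {i}))" using mt eqs by simp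
      moreover have "p (insert i (?E - T)) + p ((?E - S) - {i}) = ?ps (insert i S) + ?ps (T - {i})"
        if "i \<in> T - S" for i
      proof -
        have "insert i (?E - T) = ?E - (T - {i})" using that h by blast
        moreover have "(?E - S) - {i} = ?E - insert i S" by blast
        moreover have "insert i S \<subseteq> ?E" "T - {i} \<subseteq> ?E" using that h by auto
        ultimately show ?thesis by (simp add: add.commute)
      qed
      ultimately show ?thesis using mt_cong by (metis (no_types, lifting))
    qed
  qed
  show ?thesis unfolding is_tpv_def using fE A Bx C D by simp
qed



lemma card_compl:
  assumes "T \<subseteq> J n" shows "card (J n - T) = 2 * n - card T"
  using card_Diff_subset[OF finite_subset[OF assms fin_J] assms] card_J by simp

lemma card_le_J: "T \<subseteq> J n \<Longrightarrow> card T \<le> 2 * n"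
  using card_mono[OF fin_J] card_J by metis

lemma pinf_card:
  assumes tp: "is_tpv E r p" and "card S \<noteq> r" shows "p S = \<infinity>"
  using tpv_card[OF tp] assms(2) by blast

lemma K1:
  assumes tp: "is_tpv (J n) n p"
    and H3: "\<forall>T. T \<subseteq> J n \<and> card T = n \<longrightarrow> p (J n - T) = p (star ` T)"
    and TE: "T \<subseteq> J n" and cT: "card T = n + 1"
  shows "dvec p T (star k) = p (insert k (J n - star ` T))"
proof (cases "star k \<in> T")
  case True
  hence kT: "k \<in> star ` T" using star_in_img by metis
  have sTE: "star ` T \<subseteq> J n" using TE star_img_J by metis
  define U where "U = star ` T - {k}"
  have UE: "U \<subseteq> J n" unfolding U_def using sTE by blast
  have cU: "card U = n" unfolding U_def using kT cT finite_subset[OF sTE fin_J]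
    by (simp add: card_Diff_singleton)
  have "p (J n - U) = p (star ` U)" using H3 UE cU by blast
  moreover have "J n - U = insert k (J n - star ` T)" unfolding U_def using kT sTE by blast
  moreover have "star ` U = T - {star k}" unfolding U_def by (simp add: star_diff)
  ultimately show ?thesis unfolding dvec_def using True by simp
next
  case False
  hence kT: "k \<notin> star ` T" using star_in_img by metis
  have lhs: "dvec p T (star k) = \<infinity>" unfolding dvec_def using False by simp
  show ?thesis
  proof (cases "k \<in> J n")
    case True
    hence "insert k (J n - star ` T) = J n - star ` T" using kT by blast
    moreover have "card (J n - star ` T) \<noteq> n"
    proof -
      have sTE: "star ` T \<subseteq> J n" using TE star_img_J by metis
      have "card (J n - star ` T) = 2 * n - (n + 1)" using card_compl[OF sTE] cT by simp
      moreover have "n + 1 \<le> 2 * n" using card_le_J[OF TE] cT by simp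
      ultimately show ?thesis by linarith
    qed
    ultimately show ?thesis using lhs pinf_card[OF tp] by metis
  next
    case False
    hence "\<not> insert k (J n - star ` T) \<subseteq> J n" by simp
    hence "p (insert k (J n - star ` T)) = \<infinity>" using tpv_sub[OF tp] by metis
    thus ?thesis using lhs by simp
  qed
qed

lemma K2:
  assumes tp: "is_tpv (J n) n p"
    and H3: "\<forall>T. T \<subseteq> J n \<and> card T = n \<longrightarrow> p (J n - T) = p (star ` T)"
    and UE: "U \<subseteq> J n" and cU: "card U + 1 = n"
  shows "p (insert (star k) U) = dvec p (J n - star ` U) k"
proof -
  have sUE: "star ` U \<subseteq> J n" using UE star_img_J by metis
  define T where "T = J n - star ` U"
  have TE: "T \<subseteq> J n" unfolding T_def by blast
  have cT: "card T = n + 1" unfolding T_def using card_compl[OF sUE] cU by simp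
  have "dvec p T (star (star k)) = p (insert (star k) (J n - star ` T))"
    by (rule K1[OF tp H3 TE cT])
  moreover have "J n - star ` T = U"
  proof -
    have "star ` T = star ` J n - star ` star ` U" unfolding T_def by (simp add: star_diff)
    also have "\<dots> = J n - U" by (simp add: star_img_J_eq)
    finally show ?thesis using UE by blast
  qed
  ultimately show ?thesis unfolding T_def by simp
qed



lemma dir21:
  assumes tp: "is_tpv (J n) n p" and L: "L = tls (J n) n p"
    and H2: "tperp (J n) L = reflect ` L"
  shows "isotropical n L"
proof -
  have A: "is_tls_dim (J n) n L" unfolding is_tls_dim_def using tp L by blast
  have B: "min_twice (J n) (\<lambda>k. x k + y (star k))" if x: "x \<in> L" and y: "y \<in> L" for x y
  proof -
    have "reflect y \<in> tperp (J n) L" using H2 y by simp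
    hence "torth (J n) x (reflect y)" using x unfolding tperp_def by simp
    thus ?thesis unfolding torth_def reflect_def .
  qed
  show ?thesis unfolding isotropical_def using A B by blast
qed

lemma dir13:
  assumes tp: "is_tpv (J n) n p" and L: "L = tls (J n) n p"
    and iso: "isotropical n L"
  shows "\<forall>T. T \<subseteq> J n \<and> card T = n \<longrightarrow> p (J n - T) = p (star ` T)"
proof -
  let ?E = "J n"
  define q where "q S = p (star ` S)" for S
  define ps where "ps S = (if S \<subseteq> J n then p (J n - S) else \<infinity>)" for S
  have tq: "is_tpv ?E n q" unfolding q_def by (rule tpv_q[OF tp])
  have tps: "is_tpv ?E n ps" unfolding ps_def by (rule tpv_ps[OF tp])
  have isoL: "min_twice ?E (\<lambda>k. x k + y (star k))" if "x \<in> L" "y \<in> L" for x y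
    using iso that unfolding isotropical_def by blast
  have mr: "MR ?E n q ps"
    unfolding MR_def
  proof (intro allI impI)
    fix S T assume h: "S \<subseteq> ?E \<and> T \<subseteq> ?E \<and> card S + 1 = n \<and> card T = n + 1"
    have SE: "S \<subseteq> ?E" and TE: "T \<subseteq> ?E" and cS: "card S + 1 = n" and cT: "card T = n + 1"
      using h by simp_all
    have cET: "card (?E - T) + 1 = n"
    proof -
      have "card (?E - T) = 2 * n - (n + 1)" using card_compl[OF TE] cT by simp
      moreover have "n + 1 \<le> 2 * n" using card_le_J[OF TE] cT by simp
      ultimately show ?thesis by linarith
    qed
    have xL: "(\<lambda>k. p (insert k (?E - T))) \<in> L" unfolding L
      by (rule cocirc_in[OF tp _ cET]) blast
    have sSE: "star ` S \<subseteq> ?E" using SE star_img_J by metis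
    have yL: "(\<lambda>k. p (insert k (star ` S))) \<in> L" unfolding L
      by (rule cocirc_in[OF tp sSE]) (use cS in simp)
    have m0: "min_twice ?E (\<lambda>k. p (insert k (?E - T)) + p (insert (star k) (star ` S)))"
      using isoL[OF xL yL] by simp
    have m1: "min_twice ?E (\<lambda>k. p (insert k (?E - T)) + q (insert k S))"
      using m0 unfolding q_def by simp
    have m2: "min_twice (T - S) (\<lambda>k. p (insert k (?E - T)) + q (insert k S))"
    proof (rule iffD1[OF mt_restrict m1])
      show "T - S \<subseteq> ?E" using TE by blast
    next
      fix k assume k: "k \<in> ?E" "k \<notin> T - S"
      show "p (insert k (?E - T)) + q (insert k S) = \<infinity>"
      proof (cases "k \<in> T")
        case True
        hence "insert k S = S" using k by auto
        moreover have "q S = \<infinity>" unfolding q_def by (rule pinf_card[OF tp]) (use cS in simp)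
        ultimately show ?thesis by simp
      next
        case False
        hence "insert k (?E - T) = ?E - T" using k by blast
        moreover have "p (?E - T) = \<infinity>" by (rule pinf_card[OF tp]) (use cET in simp)
        ultimately show ?thesis by simp
      qed
    qed
    show "min_twice (T - S) (\<lambda>i. q (insert i S) + ps (T - {i}))"
    proof (rule iffD1[OF mt_cong m2])
      fix k assume k: "k \<in> T - S"
      have "T - {k} \<subseteq> ?E" using TE by blast
      hence "ps (T - {k}) = p (?E - (T - {k}))" unfolding ps_def by simp
      moreover have "?E - (T - {k}) = insert k (?E - T)" using k TE by blast
      ultimately show "p (insert k (?E - T)) + q (insert k S) = q (insert k S) + ps (T - {k})"
        by (simp add: add.commute)
    qed
  qed
  obtain c where c: "\<forall>S. q S = ps S + ereal c" using EQ[OF tq tps mr] by blast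
  obtain B where B: "p B \<noteq> \<infinity>" using tpv_ex[OF tp] by blast
  have BE: "B \<subseteq> ?E" using tpv_sub[OF tp B] .
  have sBE: "star ` B \<subseteq> ?E" using BE star_img_J by metis
  have e1: "p B = p (?E - star ` B) + ereal c"
    using c[rule_format, of "star ` B"] sBE unfolding q_def ps_def by simp
  have e2: "p (?E - star ` B) = p B + ereal c"
  proof -
    have "q (?E - B) = ps (?E - B) + ereal c" using c by blast
    moreover have "q (?E - B) = p (?E - star ` B)" unfolding q_def by (simp add: star_diff star_img_J_eq)
    moreover have "ps (?E - B) = p B" unfolding ps_def using BE by (simp add: double_diff)
    ultimately show ?thesis by simp
  qed
  have c0: "c = 0"
  proof -
    obtain b where b: "p B = ereal b" using B tpv_nm[OF tp, of B] by (cases "p B") auto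
    have "p (?E - star ` B) = ereal (b + c)" using e2 b by simp
    hence "ereal b = ereal (b + c + c)" using e1 b by simp
    thus ?thesis by simp
  qed
  show ?thesis
  proof (intro allI impI)
    fix T assume h: "T \<subseteq> ?E \<and> card T = n"
    have "q T = ps T" using c c0 by (simp add: zero_ereal_def[symmetric])
    thus "p (?E - T) = p (star ` T)" using h unfolding q_def ps_def by simp
  qed
qed



lemma dir32:
  assumes tp: "is_tpv (J n) n p" and L: "L = tls (J n) n p"
    and H3: "\<forall>T. T \<subseteq> J n \<and> card T = n \<longrightarrow> p (J n - T) = p (star ` T)"
  shows "tperp (J n) L = reflect ` L"
proof (rule subset_antisym)
  let ?E = "J n"
  show "tperp ?E L \<subseteq> reflect ` L"
  proof
    fix y assume y: "y \<in> tperp ?E L"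
    have ty: "trop_vec ?E y" and yo: "\<forall>x\<in>L. torth ?E x y" using y unfolding tperp_def by simp_all
    have "reflect y \<in> L"
      unfolding L tls_def tperp_def
    proof (intro CollectI conjI ballI)
      show "trop_vec ?E (reflect y)" by (rule reflect_vec[OF ty])
    next
      fix x assume x: "x \<in> pl_circuits ?E n p"
      obtain T c where T: "T \<subseteq> ?E" "card T = n + 1" and xe: "x = (\<lambda>i. dvec p T i + ereal c)"
        using x unfolding pl_circuits_def by blast
      have sTE: "star ` T \<subseteq> ?E" using T(1) star_img_J by metis
      have cU: "card (?E - star ` T) + 1 = n"
      proof -
        have "card (?E - star ` T) = 2 * n - (n + 1)" using card_compl[OF sTE] T(2) by simp
        moreover have "n + 1 \<le> 2 * n" using card_le_J[OF T(1)] T(2) by simp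
        ultimately show ?thesis by linarith
      qed
      have vL: "(\<lambda>k. p (insert k (?E - star ` T))) \<in> L" unfolding L
        by (rule cocirc_in[OF tp _ cU]) blast
      have o: "min_twice ?E (\<lambda>k. p (insert k (?E - star ` T)) + y k)"
        using bspec[OF yo vL] unfolding torth_def by simp
      have "min_twice ?E (\<lambda>k. (p (insert k (?E - star ` T)) + y k) + ereal c)"
        using o by (simp only: mt_shift)
      hence "min_twice ?E (\<lambda>k. dvec p T (star k) + ereal c + y (star (star k)))"
        using K1[OF tp H3 T] by (simp add: ac_simps)
      hence "min_twice ?E (\<lambda>k. dvec p T k + ereal c + y (star k))"
        using mt_reindex[OF bij_star_J, where f = "\<lambda>k. dvec p T k + ereal c + y (star k)"] by simp
      thus "torth ?E x (reflect y)" unfolding torth_def xe reflect_def .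
    qed
    moreover have "y = reflect (reflect y)" by simp
    ultimately show "y \<in> reflect ` L" by blast
  qed
next
  let ?E = "J n"
  show "reflect ` L \<subseteq> tperp ?E L"
  proof
    fix w assume "w \<in> reflect ` L"
    then obtain x where xL: "x \<in> L" and w: "w = reflect x" by blast
    have tx: "trop_vec ?E x" using xL unfolding L by (rule tls_vec)
    have tw: "trop_vec ?E (reflect x)" by (rule reflect_vec[OF tx])
    have Y: "torth ?E (\<lambda>k. p (insert k U)) (reflect x)"
      if UE: "U \<subseteq> ?E" and cU: "card U + 1 = n" for U
    proof -
      define T where "T = ?E - star ` U"
      have sUE: "star ` U \<subseteq> ?E" using UE star_img_J by metis
      have TE: "T \<subseteq> ?E" unfolding T_def by blast
      have cT: "card T = n + 1" unfolding T_def using card_compl[OF sUE] cU by simp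
      have goal: "min_twice ?E (\<lambda>k. dvec p T k + x k)"
      proof (cases "\<exists>k. dvec p T k \<noteq> \<infinity>")
        case True
        then obtain k where "dvec p T k \<noteq> \<infinity>" by blast
        hence circ: "(\<lambda>i. dvec p T i + ereal 0) \<in> pl_circuits ?E n p"
          by (rule circ_in[OF TE cT])
        have "torth ?E (\<lambda>i. dvec p T i + ereal 0) x"
          by (rule tls_orth[OF xL[unfolded L] circ])
        thus ?thesis unfolding torth_def by (simp add: zero_ereal_def[symmetric])
      next
        case False
        hence "\<forall>k\<in>?E. dvec p T k + x k = \<infinity>" by simp
        thus ?thesis unfolding min_twice_def by blast
      qed
      have "min_twice ?E (\<lambda>k. p (insert (star k) U) + x k)"
        using goal K2[OF tp H3 UE cU] unfolding T_def by simp
      hence "min_twice ?E (\<lambda>k. p (insert (star k) U) + x (star (star k)))" by simp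
      hence "min_twice ?E (\<lambda>k. p (insert k U) + x (star k))"
        using mt_reindex[OF bij_star_J, where f = "\<lambda>k. p (insert k U) + x (star k)"] by simp
      thus ?thesis unfolding torth_def reflect_def .
    qed
    have "torth ?E z (reflect x)" if zL: "z \<in> L" for z
      by (rule ORTH[OF tp zL[unfolded L] tw Y])
    thus "w \<in> tperp ?E L" unfolding tperp_def w using tw by blast
  qed
qed

theorem theorem7p3:
  fixes n :: nat and p :: "idx set \<Rightarrow> ereal" and L :: "(idx \<Rightarrow> ereal) set"
  assumes "is_tpv (J n) n p"
    and "L = tls (J n) n p"
  shows "(isotropical n L \<longleftrightarrow> tperp (J n) L = reflect ` L) \<and>
         (tperp (J n) L = reflect ` L \<longleftrightarrow>
            (\<forall>T. T \<subseteq> J n \<and> card T = n \<longrightarrow> p (J n - T) = p (star ` T)))"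
proof -
  have i13: "isotropical n L \<Longrightarrow> (\<forall>T. T \<subseteq> J n \<and> card T = n \<longrightarrow> p (J n - T) = p (star ` T))"
    using dir13[OF assms] .
  have i32: "(\<forall>T. T \<subseteq> J n \<and> card T = n \<longrightarrow> p (J n - T) = p (star ` T)) \<Longrightarrow> tperp (J n) L = reflect ` L"
    using dir32[OF assms] .
  have i21: "tperp (J n) L = reflect ` L \<Longrightarrow> isotropical n L"
    using dir21[OF assms] .
  show ?thesis using i13 i32 i21 by blast
qed


end
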